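(* Let $W=(V,B)$ be a non-degenerate formed space of Witt index $\omega\ge2$ as in the context, and let $1<k<\omega$. Then the polar Grassmann graph on singular $k$-subspaces of $W$ is not distance-regular.
   Context: $V$ is a finite-dimensional vector space over $\mathbb{F}_q$ and $W=(V,B)$ is one of: a symplectic space of dimension $2\omega$; an orthogonal space of dimension $2\omega+1$, of plus type of dimension $2\omega$, or of minus type of dimension $2\omega+2$; a unitary space of dimension $2\omega+1$ or $2\omega$ ($q$ a square). A subspace is singular if it is totally isotropic (totally singular in the orthogonal case); maximal singular subspaces have dimension $\omega$. For $k<\omega$ the polar Grassmann graph has as vertices the singular $k$-subspaces, two distinct vertices $u,v$ adjacent iff $u+v$ is a singular $(k+1)$-subspace. A connected graph is distance-regular if there are integers $b_i,c_i$ such that for any two vertices $X,Y$ at distance $i$, exactly $c_i$ neighbours of $X$ are at distance $i-1$ from $Y$ and exactly $b_i$ at distance $i+1$ from $Y$. *)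

theory Defs
  imports "HOL-Analysis.Cartesian_Space"
begin

text \<open>The ambient space is V = F_q^n, realised as the type 'a^'n with
 'a a finite field (q = CARD('a)) and n = CARD('n).\<close>

definition bilinear_form :: "('a::field^'n \<Rightarrow> 'a^'n \<Rightarrow> 'a) \<Rightarrow> bool" where
  "bilinear_form B \<longleftrightarrow>
     (\<forall>u v w. B (u + v) w = B u w + B v w) \<and> (\<forall>c u w. B (c *s u) w = c * B u w) \<and>
     (\<forall>u v w. B u (v + w) = B u v + B u w) \<and> (\<forall>c u w. B u (c *s w) = c * B u w)"

definition nondegenerate_form :: "('a::field^'n \<Rightarrow> 'a^'n \<Rightarrow> 'a) \<Rightarrow> bool" where
  "nondegenerate_form B \<longleftrightarrow> (\<forall>v. (\<forall>w. B v w = 0) \<longrightarrow> v = 0)"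

definition symplectic_form :: "('a::field^'n \<Rightarrow> 'a^'n \<Rightarrow> 'a) \<Rightarrow> bool" where
  "symplectic_form B \<longleftrightarrow> bilinear_form B \<and> (\<forall>v. B v v = 0) \<and> nondegenerate_form B"

definition polar_form :: "('a::field^'n \<Rightarrow> 'a) \<Rightarrow> 'a^'n \<Rightarrow> 'a^'n \<Rightarrow> 'a" where
  "polar_form Q u v = Q (u + v) - Q u - Q v"

definition quadratic_form :: "('a::field^'n \<Rightarrow> 'a) \<Rightarrow> bool" where
  "quadratic_form Q \<longleftrightarrow> (\<forall>c v. Q (c *s v) = c ^ 2 * Q v) \<and> bilinear_form (polar_form Q)"

text \<open>Non-degenerate (non-singular) quadratic form: no nonzero singular vector
 in the radical of the polar form (this is the usual notion in every characteristic).\<close>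
definition nondegenerate_quadratic_form :: "('a::field^'n \<Rightarrow> 'a) \<Rightarrow> bool" where
  "nondegenerate_quadratic_form Q \<longleftrightarrow> quadratic_form Q \<and>
     (\<forall>v. v \<noteq> 0 \<and> (\<forall>w. polar_form Q v w = 0) \<longrightarrow> Q v \<noteq> 0)"

text \<open>Unitary: hermitian form with respect to a field automorphism of order 2
 (its existence forces q to be a square).\<close>
definition field_involution :: "('a::field \<Rightarrow> 'a) \<Rightarrow> bool" where
  "field_involution \<sigma> \<longleftrightarrow> (\<forall>x y. \<sigma> (x + y) = \<sigma> x + \<sigma> y) \<and> (\<forall>x y. \<sigma> (x * y) = \<sigma> x * \<sigma> y)
     \<and> (\<forall>x. \<sigma> (\<sigma> x) = x) \<and> (\<exists>x. \<sigma> x \<noteq> x)"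

definition hermitian_form :: "('a::field \<Rightarrow> 'a) \<Rightarrow> ('a^'n \<Rightarrow> 'a^'n \<Rightarrow> 'a) \<Rightarrow> bool" where
  "hermitian_form \<sigma> B \<longleftrightarrow> field_involution \<sigma> \<and>
     (\<forall>u v w. B (u + v) w = B u w + B v w) \<and> (\<forall>c u w. B (c *s u) w = c * B u w) \<and>
     (\<forall>u w. B w u = \<sigma> (B u w))"

definition totally_isotropic :: "('a::field^'n \<Rightarrow> 'a^'n \<Rightarrow> 'a) \<Rightarrow> ('a^'n) set \<Rightarrow> bool" where
  "totally_isotropic B S \<longleftrightarrow> (\<forall>u\<in>S. \<forall>v\<in>S. B u v = 0)"

definition totally_singular :: "('a::field^'n \<Rightarrow> 'a) \<Rightarrow> ('a^'n) set \<Rightarrow> bool" where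
  "totally_singular Q S \<longleftrightarrow> (\<forall>u\<in>S. Q u = 0)"

definition has_witt_index :: "(('a::field^'n) set \<Rightarrow> bool) \<Rightarrow> nat \<Rightarrow> bool" where
  "has_witt_index sing \<omega> \<longleftrightarrow>
     (\<exists>S. vec.subspace S \<and> sing S \<and> vec.dim S = \<omega>) \<and>
     (\<forall>S. vec.subspace S \<and> sing S \<longrightarrow> vec.dim S \<le> \<omega>)"

text \<open>The formed spaces of the context, described by their singularity predicate:
 symplectic of dimension 2\<omega>; orthogonal of dimension 2\<omega>+1, 2\<omega> (plus type) or
 2\<omega>+2 (minus type); unitary of dimension 2\<omega>+1 or 2\<omega>; all non-degenerate of Witt index \<omega>.\<close>
definition classical_formed_space :: "(('a::{field,finite}^'n) set \<Rightarrow> bool) \<Rightarrow> nat \<Rightarrow> bool" where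
  "classical_formed_space sing \<omega> \<longleftrightarrow> has_witt_index sing \<omega> \<and>
    ((\<exists>B. symplectic_form B \<and> CARD('n) = 2 * \<omega> \<and> sing = totally_isotropic B) \<or>
     (\<exists>Q. nondegenerate_quadratic_form Q \<and> CARD('n) \<in> {2 * \<omega> + 1, 2 * \<omega>, 2 * \<omega> + 2}
          \<and> sing = totally_singular Q) \<or>
     (\<exists>\<sigma> B. hermitian_form \<sigma> B \<and> nondegenerate_form B \<and> CARD('n) \<in> {2 * \<omega> + 1, 2 * \<omega>}
          \<and> sing = totally_isotropic B))"

definition subspace_sum :: "('a::field^'n) set \<Rightarrow> ('a^'n) set \<Rightarrow> ('a^'n) set" where
  "subspace_sum U W = {u + w | u w. u \<in> U \<and> w \<in> W}"

definition singular_subspace :: "(('a::field^'n) set \<Rightarrow> bool) \<Rightarrow> nat \<Rightarrow> ('a^'n) set \<Rightarrow> bool" where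
  "singular_subspace sing k S \<longleftrightarrow> vec.subspace S \<and> sing S \<and> vec.dim S = k"

definition polar_grassmann_vertices :: "(('a::field^'n) set \<Rightarrow> bool) \<Rightarrow> nat \<Rightarrow> ('a^'n) set set" where
  "polar_grassmann_vertices sing k = {S. singular_subspace sing k S}"

definition polar_grassmann_adj :: "(('a::field^'n) set \<Rightarrow> bool) \<Rightarrow> nat \<Rightarrow> ('a^'n) set \<Rightarrow> ('a^'n) set \<Rightarrow> bool" where
  "polar_grassmann_adj sing k U W \<longleftrightarrow> U \<noteq> W \<and> singular_subspace sing (k + 1) (subspace_sum U W)"

definition gadj :: "'v set \<Rightarrow> ('v \<Rightarrow> 'v \<Rightarrow> bool) \<Rightarrow> 'v \<Rightarrow> 'v \<Rightarrow> bool" where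
  "gadj Vx E x y \<longleftrightarrow> x \<in> Vx \<and> y \<in> Vx \<and> E x y"

definition graph_connected :: "'v set \<Rightarrow> ('v \<Rightarrow> 'v \<Rightarrow> bool) \<Rightarrow> bool" where
  "graph_connected Vx E \<longleftrightarrow> (\<forall>x\<in>Vx. \<forall>y\<in>Vx. \<exists>n. (gadj Vx E ^^ n) x y)"

definition gdist :: "'v set \<Rightarrow> ('v \<Rightarrow> 'v \<Rightarrow> bool) \<Rightarrow> 'v \<Rightarrow> 'v \<Rightarrow> nat" where
  "gdist Vx E x y = (LEAST n. (gadj Vx E ^^ n) x y)"

definition distance_regular :: "'v set \<Rightarrow> ('v \<Rightarrow> 'v \<Rightarrow> bool) \<Rightarrow> bool" where
  "distance_regular Vx E \<longleftrightarrow> graph_connected Vx E \<and>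
    (\<exists>b c :: nat \<Rightarrow> nat. \<forall>x\<in>Vx. \<forall>y\<in>Vx.
       card {z \<in> Vx. E x z \<and> gdist Vx E z y = gdist Vx E x y + 1} = b (gdist Vx E x y) \<and>
       (gdist Vx E x y \<ge> 1 \<longrightarrow>
          card {z \<in> Vx. E x z \<and> gdist Vx E z y = gdist Vx E x y - 1} = c (gdist Vx E x y)))"

end

theory Submission
  imports Defs
begin


lemma gdist_1:
  assumes "x \<in> V" "y \<in> V" "\<exists>n. (gadj V E ^^ n) x y"
  shows "gdist V E x y = 1 \<longleftrightarrow> E x y \<and> x \<noteq> y"
proof
  assume h: "gdist V E x y = 1"
  have "(gadj V E ^^ gdist V E x y) x y" unfolding gdist_def using assms(3) by (rule LeastI_ex)
  then have "gadj V E x y" using h by (metis relpowp_1)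
  moreover have "x \<noteq> y"
  proof
    assume "x = y"
    then have "(gadj V E ^^ 0) x y" by (simp add: relpowp_0_I)
    then have "gdist V E x y = 0" unfolding gdist_def by (rule Least_eq_0)
    with h show False by simp
  qed
  ultimately show "E x y \<and> x \<noteq> y" by (simp add: gadj_def)
next
  assume h: "E x y \<and> x \<noteq> y"
  show "gdist V E x y = 1" unfolding gdist_def
  proof (rule Least_equality)
    show "(gadj V E ^^ 1) x y" using h assms unfolding relpowp_1 by (simp add: gadj_def)
    fix m assume "(gadj V E ^^ m) x y"
    then show "1 \<le> m" using h by (cases m) (auto elim: relpowp_0_E)
  qed
qed

lemma gdist_2:
  assumes "x \<in> V" "y \<in> V" "z \<in> V" "x \<noteq> y" "\<not> E x y" "E x z" "E z y"
  shows "gdist V E x y = 2"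
  unfolding gdist_def
proof (rule Least_equality)
  have "(gadj V E ^^ 1) x z" using assms unfolding relpowp_1 by (simp add: gadj_def)
  then have "(gadj V E ^^ Suc 1) x y" by (rule relpowp_Suc_I) (use assms in \<open>simp add: gadj_def\<close>)
  then show "(gadj V E ^^ 2) x y" by (simp add: numeral_2_eq_2)
  fix m assume m: "(gadj V E ^^ m) x y"
  show "2 \<le> m"
  proof (rule ccontr)
    assume "\<not> 2 \<le> m"
    then have "m = 0 \<or> m = 1" by auto
    then show False using m assms by (auto elim: relpowp_0_E simp: gadj_def)
  qed
qed



locale pform =
  fixes f :: "'a::field^'n \<Rightarrow> 'a^'n \<Rightarrow> 'a" and sv :: "'a^'n \<Rightarrow> bool"
    and sing :: "('a^'n) set \<Rightarrow> bool"
  assumes add1: "\<And>x y z. f (x + y) z = f x z + f y z"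
    and scale1: "\<And>c x z. f (c *s x) z = c * f x z"
    and add2: "\<And>x y z. f z (x + y) = f z x + f z y"
    and rs: "\<And>c p. \<exists>d. \<forall>v. f v (d *s p) = c * f v p"
    and refl0: "\<And>x y. f x y = 0 \<longleftrightarrow> f y x = 0"
    and sv0: "sv 0"
    and svadd: "\<And>x y. sv x \<Longrightarrow> sv y \<Longrightarrow> f x y = 0 \<Longrightarrow> sv (x + y)"
    and svscale: "\<And>c x. sv x \<Longrightarrow> sv (c *s x)"
    and svff: "\<And>x. sv x \<Longrightarrow> f x x = 0"
    and svfix: "\<And>v a. sv a \<Longrightarrow> f v a \<noteq> 0 \<Longrightarrow> \<exists>c. sv (v + c *s a)"
    and nondeg: "\<And>v. sv v \<Longrightarrow> (\<forall>x. f x v = 0) \<Longrightarrow> v = 0"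
    and singdef: "\<And>S. vec.subspace S \<Longrightarrow> sing S \<longleftrightarrow> (\<forall>u\<in>S. sv u) \<and> (\<forall>u\<in>S. \<forall>v\<in>S. f u v = 0)"
begin

lemma f_zero1[simp]: "f 0 z = 0"
proof -
  have "f 0 z + f 0 z = f 0 z + 0" using add1[of 0 0 z] by simp
  then show ?thesis by (rule add_left_imp_eq)
qed

lemma f_neg1: "f (- x) z = - f x z"
proof -
  have "f x z + f (- x) z = 0" using add1[of x "-x" z] by simp
  then show ?thesis by (simp only: add_eq_0_iff)
qed

lemma f_diff1: "f (x - y) z = f x z - f y z"
  using add1[of x "-y" z] f_neg1[of y z] by simp

lemma f_zero2[simp]: "f z 0 = 0"
proof -
  have "f z 0 + f z 0 = f z 0 + 0" using add2[of z 0 0] by simp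
  then show ?thesis by (rule add_left_imp_eq)
qed

lemma f_neg2: "f z (- x) = - f z x"
proof -
  have "f z x + f z (- x) = 0" using add2[of z x "-x"] by simp
  then show ?thesis by (simp only: add_eq_0_iff)
qed

lemma f_diff2: "f z (x - y) = f z x - f z y"
  using add2[of z x "-y"] f_neg2[of z y] by simp

lemma symz: "f x y = 0 \<Longrightarrow> f y x = 0"
  using refl0 by simp

lemma symnz: "f x y \<noteq> 0 \<Longrightarrow> f y x \<noteq> 0"
  using refl0 by simp

lemma ker_subspace: "vec.subspace {x. f x a = 0}"
  unfolding vec.subspace_def by (auto simp: add1 scale1)

lemma ker_span: "(\<forall>x\<in>S. f x a = 0) \<Longrightarrow> x \<in> vec.span S \<Longrightarrow> f x a = 0"
  using vec.span_minimal[of S "{x. f x a = 0}"] ker_subspace by auto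

lemma notin_span: "(\<forall>x\<in>S. f x a = 0) \<Longrightarrow> f y a \<noteq> 0 \<Longrightarrow> y \<notin> vec.span S"
  using ker_span by blast

lemma orth_span:
  assumes "\<forall>x\<in>X. \<forall>y\<in>X. f x y = 0" "u \<in> vec.span X" "v \<in> vec.span X"
  shows "f u v = 0"
proof -
  have "\<forall>y\<in>X. f u y = 0" using assms(1,2) ker_span by blast
  then have "\<forall>y\<in>X. f y u = 0" by (metis symz)
  then have "f v u = 0" using ker_span assms(3) by blast
  then show ?thesis by (rule symz)
qed

lemma sing_span:
  assumes "\<forall>x\<in>X. sv x" "\<forall>x\<in>X. \<forall>y\<in>X. f x y = 0"
  shows "sing (vec.span X)"
proof -
  have "\<forall>u\<in>vec.span X. sv u"
  proof
    fix u assume "u \<in> vec.span X"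
    then have "u \<in> vec.span X \<and> sv u"
    proof (induction rule: vec.span_induct_alt)
      case base then show ?case by (simp add: sv0 vec.span_zero)
    next
      case (step c x y)
      have "f x y = 0" using orth_span[OF assms(2)] step vec.span_base by blast
      then have "f (c *s x) y = 0" by (simp add: scale1)
      have "sv (c *s x)" using step assms(1) svscale by blast
      then have "sv (c *s x + y)" using svadd step \<open>f (c *s x) y = 0\<close> by blast
      moreover have "c *s x + y \<in> vec.span X" using step vec.span_add vec.span_scale vec.span_base by blast
      ultimately show ?case by blast
    qed
    then show "sv u" by simp
  qed
  then show ?thesis using singdef[OF vec.subspace_span] orth_span[OF assms(2)] by blast
qed

lemma sing_elems:
  assumes "vec.subspace S" "sing S" "u \<in> S" "v \<in> S"
  shows "sv u" "f u v = 0"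
  using singdef[OF assms(1)] assms(2-4) by blast+

lemma LA:
  assumes "finite P"
  shows "(\<forall>v. (\<forall>p\<in>P. f v p = 0) \<longrightarrow> f v a = 0) \<Longrightarrow> \<exists>p\<in>vec.span P. \<forall>v. f v a = f v p"
  using assms
proof (induction P arbitrary: a rule: finite_induct)
  case empty
  then show ?case by (intro bexI[of _ 0]) (auto simp: vec.span_zero)
next
  case (insert q P)
  show ?case
  proof (cases "\<forall>v. (\<forall>p\<in>P. f v p = 0) \<longrightarrow> f v q = 0")
    case True
    then have "\<forall>v. (\<forall>p\<in>P. f v p = 0) \<longrightarrow> f v a = 0" using insert.prems by auto
    then obtain p where "p \<in> vec.span P" "\<forall>v. f v a = f v p" using insert.IH by blast
    moreover have "vec.span P \<subseteq> vec.span (insert q P)" by (rule vec.span_mono) auto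
    ultimately show ?thesis by blast
  next
    case False
    then obtain v0 where v0: "\<forall>p\<in>P. f v0 p = 0" "f v0 q \<noteq> 0" by blast
    define l where "l = f v0 a / f v0 q"
    obtain d where d: "\<forall>v. f v (d *s q) = l * f v q" using rs by blast
    define a' where "a' = a - d *s q"
    have "\<forall>v. (\<forall>p\<in>P. f v p = 0) \<longrightarrow> f v a' = 0"
    proof (intro allI impI)
      fix v assume hv: "\<forall>p\<in>P. f v p = 0"
      define m where "m = f v q / f v0 q"
      define v' where "v' = v - m *s v0"
      have "\<forall>p\<in>P. f v' p = 0" using hv v0 by (simp add: v'_def f_diff1 scale1)
      moreover have "f v' q = 0" using v0 by (simp add: v'_def f_diff1 scale1 m_def)
      ultimately have "f v' a = 0" using insert.prems by auto
      then have "f v a = m * f v0 a" by (simp add: v'_def f_diff1 scale1)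
      then have "f v a = l * f v q" using v0 by (simp add: m_def l_def field_simps)
      then show "f v a' = 0" by (simp add: a'_def f_diff2 d)
    qed
    then obtain p where p: "p \<in> vec.span P" "\<forall>v. f v a' = f v p" using insert.IH by blast
    have "p + d *s q \<in> vec.span (insert q P)"
      by (meson p(1) insert_iff subsetD subset_insertI vec.span_add vec.span_base vec.span_mono vec.span_scale)
    moreover have "\<forall>v. f v a = f v (p + d *s q)"
      using p(2) d by (simp add: a'_def f_diff2 add2 algebra_simps)
    ultimately show ?thesis by blast
  qed
qed

lemma partner:
  assumes "finite P" "sv a" "\<forall>p\<in>P. f a p = 0"
    and "\<And>p. p \<in> vec.span P \<Longrightarrow> \<forall>x. f x (a - p) = 0 \<Longrightarrow> False"
  shows "\<exists>w. sv w \<and> (\<forall>p\<in>P. f w p = 0) \<and> f w a \<noteq> 0"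
proof -
  have "\<exists>v. (\<forall>p\<in>P. f v p = 0) \<and> f v a \<noteq> 0"
  proof (rule ccontr)
    assume "\<not> ?thesis"
    then have "\<forall>v. (\<forall>p\<in>P. f v p = 0) \<longrightarrow> f v a = 0" by blast
    then obtain p where "p \<in> vec.span P" "\<forall>v. f v a = f v p" using LA[OF assms(1)] by blast
    then show False using assms(4)[of p] by (simp add: f_diff2)
  qed
  then obtain v where v: "\<forall>p\<in>P. f v p = 0" "f v a \<noteq> 0" by blast
  obtain c where c: "sv (v + c *s a)" using svfix[OF assms(2) v(2)] by blast
  have "\<forall>p\<in>P. f (v + c *s a) p = 0" using v(1) assms(3) by (simp add: add1 scale1)
  moreover have "f (v + c *s a) a \<noteq> 0" using v(2) svff[OF assms(2)] by (simp add: add1 scale1)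
  ultimately show ?thesis using c by blast
qed

definition OS :: "('a^'n) set \<Rightarrow> bool" where
  "OS X \<longleftrightarrow> (\<forall>x\<in>X. sv x) \<and> (\<forall>x\<in>X. \<forall>y\<in>X. f x y = 0)"

lemma OS_insert: "OS X \<Longrightarrow> sv a \<Longrightarrow> \<forall>x\<in>X. f a x = 0 \<Longrightarrow> OS (insert a X)"
  unfolding OS_def using svff symz by auto

lemma OS_sub: "OS X \<Longrightarrow> Y \<subseteq> X \<Longrightarrow> OS Y"
  unfolding OS_def by blast

lemma vert:
  assumes "vec.independent X" "card X = k" "OS X"
  shows "vec.span X \<in> polar_grassmann_vertices sing k"
  using assms sing_span unfolding polar_grassmann_vertices_def singular_subspace_def OS_def
  by (simp add: vec.dim_span_eq_card_independent vec.dim_eq_card_independent)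

lemma adj:
  assumes "vec.independent (X \<union> Y)" "card (X \<union> Y) = k + 1" "OS (X \<union> Y)" "vec.span X \<noteq> vec.span Y"
  shows "polar_grassmann_adj sing k (vec.span X) (vec.span Y)"
proof -
  have "subspace_sum (vec.span X) (vec.span Y) = vec.span (X \<union> Y)"
    unfolding subspace_sum_def vec.span_Un by simp
  then show ?thesis using assms sing_span unfolding polar_grassmann_adj_def singular_subspace_def OS_def
    by (simp add: vec.dim_span_eq_card_independent vec.dim_eq_card_independent)
qed

lemma nonadj:
  assumes "a \<in> X \<union> Y" "b \<in> X \<union> Y" "f a b \<noteq> 0"
  shows "\<not> polar_grassmann_adj sing k (vec.span X) (vec.span Y)"
proof
  assume "polar_grassmann_adj sing k (vec.span X) (vec.span Y)"
  then have s: "sing (vec.span (X \<union> Y))"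
    unfolding polar_grassmann_adj_def singular_subspace_def subspace_sum_def vec.span_Un by simp
  have "a \<in> vec.span (X \<union> Y)" "b \<in> vec.span (X \<union> Y)" using assms vec.span_base by blast+
  then have "f a b = 0" using sing_elems(2)[OF vec.subspace_span s] by blast
  with assms(3) show False by simp
qed

lemma ins_indep:
  assumes "vec.independent S" "a \<notin> vec.span S"
  shows "vec.independent (insert a S)" "card (insert a S) = Suc (card S)"
proof -
  show "vec.independent (insert a S)" using assms vec.independent_insertI by blast
  have "a \<notin> S" using assms(2) vec.span_base by blast
  moreover have "finite S" using assms(1) vec.finiteI_independent by blast
  ultimately show "card (insert a S) = Suc (card S)" by simp
qed

end


context pform begin

lemma dim_int:
  assumes "vec.subspace U" "vec.subspace Z"
  shows "vec.dim (subspace_sum U Z) + vec.dim (U \<inter> Z) = vec.dim U + vec.dim Z"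
  unfolding subspace_sum_def using vec.dim_sums_Int[OF assms] by simp

lemma in_sum1: "vec.subspace Z \<Longrightarrow> x \<in> U \<Longrightarrow> x \<in> subspace_sum U Z"
  unfolding subspace_sum_def by (metis (mono_tags, lifting) add.right_neutral mem_Collect_eq vec.subspace_0)

lemma in_sum2: "vec.subspace U \<Longrightarrow> x \<in> Z \<Longrightarrow> x \<in> subspace_sum U Z"
  unfolding subspace_sum_def by (metis (mono_tags, lifting) add_0 mem_Collect_eq vec.subspace_0)

lemma unique_cn:
  assumes U: "U = vec.span (insert u2 (insert u1 E))"
    and Wb: "Wb = vec.span (insert w2 (insert w1 E))"
    and Z0: "Z0 = vec.span (insert w1 (insert u1 E))"
    and dU: "vec.dim U = k" and dWb: "vec.dim Wb = k" and dZ0: "vec.dim Z0 = k"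
    and dsum: "vec.dim (vec.span (insert w2 (insert u2 (insert u1 (insert w1 E))))) = k + 2"
    and k2: "2 \<le> k"
    and o1: "\<forall>x\<in>insert u2 (insert u1 E). f x u2 = 0"
    and o2: "\<forall>x\<in>insert w1 E. f x u2 = 0"
    and o3: "\<forall>x\<in>insert u1 E. f x w2 = 0"
    and o4: "\<forall>x\<in>insert w2 (insert w1 E). f x w2 = 0"
    and n1: "f w2 u2 \<noteq> 0" and n2: "f u2 w2 \<noteq> 0"
    and Zv: "Z \<in> polar_grassmann_vertices sing k"
    and a1: "polar_grassmann_adj sing k U Z" and a2: "polar_grassmann_adj sing k Z Wb"
  shows "Z = Z0"
proof -
  have sZ: "vec.subspace Z" "vec.dim Z = k" using Zv
    unfolding polar_grassmann_vertices_def singular_subspace_def by auto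
  have sU: "vec.subspace U" "vec.subspace Wb" "vec.subspace Z0" using U Wb Z0 by auto
  have s1: "vec.subspace (subspace_sum U Z)" "sing (subspace_sum U Z)" "vec.dim (subspace_sum U Z) = k + 1"
    using a1 unfolding polar_grassmann_adj_def singular_subspace_def by auto
  have s2: "vec.subspace (subspace_sum Z Wb)" "sing (subspace_sum Z Wb)" "vec.dim (subspace_sum Z Wb) = k + 1"
    using a2 unfolding polar_grassmann_adj_def singular_subspace_def by auto
  have d1: "vec.dim (U \<inter> Z) = k - 1" using dim_int[OF sU(1) sZ(1)] s1(3) dU sZ(2) by simp
  have d2: "vec.dim (Z \<inter> Wb) = k - 1" using dim_int[OF sZ(1) sU(2)] s2(3) dWb sZ(2) by simp
  have "subspace_sum U Wb = vec.span (insert w2 (insert u2 (insert u1 (insert w1 E))))"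
    unfolding U Wb subspace_sum_def vec.span_Un[symmetric] by (simp add: insert_commute)
  then have d3: "vec.dim (U \<inter> Wb) = k - 2" using dim_int[OF sU(1) sU(2)] dsum dU dWb by simp
  define I1 where "I1 = U \<inter> Z"
  define I2 where "I2 = Z \<inter> Wb"
  have sI: "vec.subspace I1" "vec.subspace I2" unfolding I1_def I2_def
    using sU sZ vec.subspace_inter by blast+
  have "I1 \<inter> I2 \<subseteq> U \<inter> Wb" unfolding I1_def I2_def by blast
  then have "vec.dim (I1 \<inter> I2) \<le> k - 2" using d3 vec.dim_subset by metis
  moreover have "vec.dim (subspace_sum I1 I2) + vec.dim (I1 \<inter> I2) = (k - 1) + (k - 1)"
    using dim_int[OF sI] d1 d2 unfolding I1_def I2_def by simp
  ultimately have dI: "vec.dim (subspace_sum I1 I2) \<ge> k" using k2 by linarith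
  have "subspace_sum I1 I2 \<subseteq> Z" unfolding subspace_sum_def I1_def I2_def
    using sZ(1) vec.subspace_add by blast
  moreover have "vec.subspace (subspace_sum I1 I2)"
    unfolding subspace_sum_def using vec.subspace_sums[OF sI] by simp
  ultimately have ZI: "subspace_sum I1 I2 = Z" using vec.subspace_dim_equal sZ dI by metis
  have "Z \<subseteq> Z0"
  proof
    fix z assume zZ: "z \<in> Z"
    then obtain i1 i2 where i: "z = i1 + i2" "i1 \<in> U" "i2 \<in> Wb"
      using ZI unfolding subspace_sum_def I1_def I2_def by blast
    obtain b where b: "i1 - b *s u2 \<in> vec.span (insert u1 E)" using i(2) U vec.span_insert by blast
    obtain d where d: "i2 - d *s w2 \<in> vec.span (insert w1 E)" using i(3) Wb vec.span_insert by blast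
    define s1 where "s1 = i1 - b *s u2"
    define s2 where "s2 = i2 - d *s w2"
    have "u2 \<in> U" using U vec.span_base by blast
    then have "u2 \<in> subspace_sum U Z" "z \<in> subspace_sum U Z" using in_sum1 in_sum2 sU sZ zZ by blast+
    then have fz1: "f z u2 = 0" using sing_elems(2)[OF s1(1,2)] by blast
    have "w2 \<in> Wb" using Wb vec.span_base by blast
    then have "w2 \<in> subspace_sum Z Wb" "z \<in> subspace_sum Z Wb" using in_sum1 in_sum2 sU sZ zZ by blast+
    then have fz2: "f z w2 = 0" using sing_elems(2)[OF s2(1,2)] by blast
    have "f i1 u2 = 0" using ker_span[OF o1] i(2) U by blast
    moreover have "f s2 u2 = 0" using ker_span[OF o2] d s2_def by blast
    moreover have "i2 = s2 + d *s w2" using s2_def by simp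
    ultimately have "f z u2 = d * f w2 u2" using i(1) by (simp add: add1 scale1)
    then have d0: "d = 0" using fz1 n1 by simp
    have "f i2 w2 = 0" using ker_span[OF o4] i(3) Wb by blast
    moreover have "f s1 w2 = 0" using ker_span[OF o3] b s1_def by blast
    moreover have "i1 = s1 + b *s u2" using s1_def by simp
    ultimately have "f z w2 = b * f u2 w2" using i(1) by (simp add: add1 scale1)
    then have b0: "b = 0" using fz2 n2 by simp
    have "z = s1 + s2" using i(1) s1_def s2_def b0 d0 by simp
    moreover have "vec.span (insert u1 E) \<subseteq> Z0" "vec.span (insert w1 E) \<subseteq> Z0"
      unfolding Z0 by (intro vec.span_mono; blast)+
    ultimately show "z \<in> Z0" using b d s1_def s2_def sU(3) vec.subspace_add by blast
  qed
  then show "Z = Z0" using vec.subspace_dim_equal[OF sZ(1) sU(3)] sZ(2) dZ0 by simp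
qed

end


context pform begin

theorem main:
  assumes M: "vec.subspace M" "sing M" "k + 1 \<le> vec.dim M" and k2: "2 \<le> k"
  shows "\<not> distance_regular (polar_grassmann_vertices sing k) (polar_grassmann_adj sing k)"
proof
  assume DR: "distance_regular (polar_grassmann_vertices sing k) (polar_grassmann_adj sing k)"
  obtain B where B: "finite B" "B \<subseteq> M" "vec.independent B" "vec.span B = M" "card B = vec.dim M"
    using vec.basis_subspace_exists[OF M(1)] by metis
  obtain C where C: "C \<subseteq> B" "card C = k + 1" "finite C"
    using obtain_subset_with_card_n[of "k+1" B] M(3) B(5) by metis
  have iC: "vec.independent C" using vec.independent_mono[OF B(3) C(1)] .
  have CM: "C \<subseteq> M" using B(2) C(1) by blast
  have Ms: "\<forall>x\<in>M. sv x" and Mo: "\<forall>x\<in>M. \<forall>y\<in>M. f x y = 0"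
    using sing_elems[OF M(1,2)] by blast+
  have OSM: "OS M" unfolding OS_def using Ms Mo by blast
  have spM: "vec.span X \<subseteq> M" if "X \<subseteq> M" for X
    using vec.span_minimal[OF that M(1)] .
  have "card C > 0" using C(2) by simp
  then obtain u1 where u1: "u1 \<in> C" by (metis card_gt_0_iff ex_in_conv)
  have "card (C - {u1}) = k" using C u1 by simp
  then have "card (C - {u1}) > 0" using k2 by simp
  then obtain u2 where u2: "u2 \<in> C - {u1}" by (metis card_gt_0_iff ex_in_conv)
  have "card (C - {u1, u2}) = k - 1" using C u1 u2 by (auto simp: card_Diff_subset card_insert_if)
  then have "card (C - {u1, u2}) > 0" using k2 by simp
  then obtain w1 where w1: "w1 \<in> C - {u1, u2}" by (metis card_gt_0_iff ex_in_conv)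
  define E where "E = C - {u1, u2, w1}"
  have Cdef: "C = insert u1 (insert u2 (insert w1 E))" using u1 u2 w1 E_def by blast
  have nE: "u1 \<notin> E" "u2 \<notin> E" "w1 \<notin> E" "u1 \<noteq> u2" "u1 \<noteq> w1" "u2 \<noteq> w1"
    using E_def u2 w1 by auto
  have fE: "finite E" using C(3) E_def by simp
  have cE: "card E = k - 2" using C(2) Cdef nE fE by simp
  have EM: "E \<subseteq> M" "u1 \<in> M" "u2 \<in> M" "w1 \<in> M" using CM Cdef by auto
  have ndep: "a \<notin> vec.span (C - {a})" if "a \<in> C" for a
    using iC that unfolding vec.dependent_def by blast
  have w1U: "w1 \<notin> vec.span (insert u2 (insert u1 E))"
  proof -
    have "C - {w1} = insert u2 (insert u1 E)" using Cdef nE by blast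
    then show ?thesis using ndep[of w1] Cdef by auto
  qed
  have u2Z: "u2 \<notin> vec.span (insert w1 (insert u1 E))"
  proof -
    have "C - {u2} = insert w1 (insert u1 E)" using Cdef nE by blast
    then show ?thesis using ndep[of u2] Cdef by auto
  qed
  obtain w2 where w2: "sv w2" "\<forall>p\<in>insert w1 (insert u1 E). f w2 p = 0" "f w2 u2 \<noteq> 0"
  proof -
    have "\<exists>w. sv w \<and> (\<forall>p\<in>insert w1 (insert u1 E). f w p = 0) \<and> f w u2 \<noteq> 0"
    proof (rule partner)
      show "finite (insert w1 (insert u1 E))" using fE by simp
      show "sv u2" using Ms EM(3) by blast
      have PM: "insert w1 (insert u1 E) \<subseteq> M" using EM by blast
      show "\<forall>p\<in>insert w1 (insert u1 E). f u2 p = 0" using Mo EM(3) PM by blast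
      fix p assume p: "p \<in> vec.span (insert w1 (insert u1 E))" "\<forall>x. f x (u2 - p) = 0"
      have "p \<in> M" using spM[OF PM] p(1) by blast
      then have "u2 - p \<in> M" using EM(3) vec.subspace_diff[OF M(1)] by blast
      then have "sv (u2 - p)" using Ms by blast
      then have "u2 - p = 0" by (rule nondeg[OF _ p(2)])
      then show False using p(1) u2Z by simp
    qed
    then show ?thesis using that by blast
  qed
  have n2: "f u2 w2 \<noteq> 0" using symnz w2(3) .
  have w2o: "f x w2 = 0" if "x \<in> insert w1 (insert u1 E)" for x using symz[OF w2(2)[rule_format, OF that]] .
  have w2n: "w2 \<notin> vec.span X" if "X \<subseteq> M" for X
  proof (rule notin_span[of X u2 w2])
    show "\<forall>x\<in>X. f x u2 = 0" using Mo EM(3) that by blast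
  qed (rule w2(3))
  have w1w2: "f w1 w2 = 0" using w2o by simp
  obtain y where y: "sv y" "\<forall>p\<in>insert w2 (insert u2 (insert u1 E)). f y p = 0" "f y w1 \<noteq> 0"
  proof -
    have "\<exists>w. sv w \<and> (\<forall>p\<in>insert w2 (insert u2 (insert u1 E)). f w p = 0) \<and> f w w1 \<noteq> 0"
    proof (rule partner)
      show "finite (insert w2 (insert u2 (insert u1 E)))" using fE by simp
      show "sv w1" using Ms EM(4) by blast
      have QM: "insert u2 (insert u1 E) \<subseteq> M" using EM by blast
      have "\<forall>p\<in>insert u2 (insert u1 E). f w1 p = 0" using Mo EM(4) QM by blast
      then show "\<forall>p\<in>insert w2 (insert u2 (insert u1 E)). f w1 p = 0" using w1w2 by simp
      fix p assume p: "p \<in> vec.span (insert w2 (insert u2 (insert u1 E)))" "\<forall>x. f x (w1 - p) = 0"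
      obtain c where c: "p - c *s w2 \<in> vec.span (insert u2 (insert u1 E))"
        using p(1) vec.span_insert by blast
      define s where "s = p - c *s w2"
      have sM: "s \<in> M" using c s_def spM[OF QM] by blast
      have "f (w1 - p) u2 = 0" using symz[OF p(2)[rule_format, of u2]] .
      moreover have "w1 - p = (w1 - s) - c *s w2" using s_def by simp
      moreover have w1s: "w1 - s \<in> M" using sM EM(4) vec.subspace_diff[OF M(1)] by blast
      moreover have "f (w1 - s) u2 = 0" using Mo w1s EM(3) by blast
      ultimately have "c * f w2 u2 = 0" by (simp add: f_diff1 scale1)
      then have c0: "c = 0" using w2(3) by simp
      then have "p = s" using s_def by simp
      then have "w1 - p \<in> M" using w1s by simp
      then have "sv (w1 - p)" using Ms by blast
      then have "w1 - p = 0" by (rule nondeg[OF _ p(2)])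
      then show False using c c0 w1U by simp
    qed
    then show ?thesis using that by blast
  qed
  have yn: "y \<notin> vec.span X" if "\<forall>x\<in>X. f x w1 = 0" for X
    by (rule notin_span[of X w1 y, OF that y(3)])
  define XU where "XU = insert u2 (insert u1 E)"
  define XWb where "XWb = insert w2 (insert w1 E)"
  define XWa where "XWa = insert w2 (insert u1 E)"
  define XZ0 where "XZ0 = insert w1 (insert u1 E)"
  define XZ1 where "XZ1 = insert y (insert u1 E)"
  define U where "U = vec.span XU"
  define Wb where "Wb = vec.span XWb"
  define Wa where "Wa = vec.span XWa"
  define Z0 where "Z0 = vec.span XZ0"
  define Z1 where "Z1 = vec.span XZ1"
  have XM: "XU \<subseteq> M" "XZ0 \<subseteq> M" "insert u1 E \<subseteq> M" "insert w1 E \<subseteq> M"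
    unfolding XU_def XZ0_def using EM by auto
  have iE1: "vec.independent (insert u1 E)" "vec.independent (insert w1 E)"
    "vec.independent XU" "vec.independent XZ0"
    unfolding XU_def XZ0_def by (rule vec.independent_mono[OF iC]; use Cdef in blast)+
  have cards: "card (insert u1 E) = k - 1" "card (insert w1 E) = k - 1" "card XU = k" "card XZ0 = k"
    unfolding XU_def XZ0_def using cE nE fE k2 by auto
  have oU: "OS XU" "OS XZ0" "OS (insert u1 E)" using OS_sub[OF OSM] XM by auto
  have oWa: "OS XWa" unfolding XWa_def
    by (rule OS_insert[OF oU(3) w2(1)]) (use w2(2) in auto)
  have iWb: "vec.independent XWb" "card XWb = k" unfolding XWb_def
    using ins_indep[OF iE1(2) w2n[OF XM(4)]] cards k2 by auto
  have iWa: "vec.independent XWa" "card XWa = k" unfolding XWa_def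
    using ins_indep[OF iE1(1) w2n[OF XM(3)]] cards k2 by auto
  have yperp: "\<forall>x\<in>insert u1 E. f x w1 = 0" "\<forall>x\<in>XU. f x w1 = 0" "\<forall>x\<in>XZ0. f x w1 = 0"
     "\<forall>x\<in>XWa. f x w1 = 0"
    using Mo EM XM w2o unfolding XWa_def by (auto simp: w2(2))
  have iZ1: "vec.independent XZ1" "card XZ1 = k" unfolding XZ1_def
    using ins_indep[OF iE1(1) yn[OF yperp(1)]] cards k2 by auto
  have oZ1: "OS XZ1" unfolding XZ1_def
    by (rule OS_insert[OF oU(3) y(1)]) (use y(2) in auto)
  have vU: "U \<in> polar_grassmann_vertices sing k" unfolding U_def using vert iE1(3) cards(3) oU(1) by blast
  have vZ0: "Z0 \<in> polar_grassmann_vertices sing k" unfolding Z0_def using vert iE1(4) cards(4) oU(2) by blast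
  have vWa: "Wa \<in> polar_grassmann_vertices sing k" unfolding Wa_def using vert iWa oWa by blast
  have vZ1: "Z1 \<in> polar_grassmann_vertices sing k" unfolding Z1_def using vert iZ1 oZ1 by blast
  have "OS XWb" unfolding XWb_def
    by (rule OS_insert[OF OS_sub[OF OSM XM(4)] w2(1)]) (use w2(2) in auto)
  then have vWb: "Wb \<in> polar_grassmann_vertices sing k" unfolding Wb_def using vert iWb by blast
  have u2U: "u2 \<in> U" "w1 \<in> Z0" "w2 \<in> Wb" "w2 \<in> Wa" "y \<in> Z1"
    unfolding U_def Z0_def Wb_def Wa_def Z1_def XU_def XZ0_def XWb_def XWa_def XZ1_def
    by (auto intro: vec.span_base)
  have w2nU: "w2 \<notin> U" "w2 \<notin> Z0" unfolding U_def Z0_def using w2n XM by auto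
  have w1nU: "w1 \<notin> U" using w1U unfolding U_def XU_def .
  have ynZ: "y \<notin> U" "y \<notin> Z0" "y \<notin> Wa"
    unfolding U_def Z0_def Wa_def using yn yperp by auto
  have e1: "XU \<union> XZ0 = insert w1 XU" unfolding XU_def XZ0_def by auto
  have aUZ0: "polar_grassmann_adj sing k U Z0" unfolding U_def Z0_def
  proof (rule adj)
    show "vec.independent (XU \<union> XZ0)" "card (XU \<union> XZ0) = k + 1"
      unfolding e1 using ins_indep[OF iE1(3)] w1nU cards(3) unfolding U_def by auto
    show "OS (XU \<union> XZ0)" using OS_sub[OF OSM] XM by blast
    show "vec.span XU \<noteq> vec.span XZ0" using u2U(2) w1nU unfolding U_def Z0_def by blast
  qed
  have e2: "XZ0 \<union> XWb = insert w2 XZ0" "XZ0 \<union> XWa = insert w2 XZ0"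
    unfolding XZ0_def XWb_def XWa_def by auto
  have oZW: "OS (insert w2 XZ0)" by (rule OS_insert[OF oU(2) w2(1)]) (use w2(2) XZ0_def in auto)
  have iZW: "vec.independent (insert w2 XZ0)" "card (insert w2 XZ0) = k + 1"
    using ins_indep[OF iE1(4)] w2nU(2) cards(4) unfolding Z0_def by auto
  have aZ0Wb: "polar_grassmann_adj sing k Z0 Wb" unfolding Z0_def Wb_def
    by (rule adj) (use e2 oZW iZW u2U(3) w2nU(2) in \<open>auto simp: Z0_def Wb_def\<close>)
  have aZ0Wa: "polar_grassmann_adj sing k Z0 Wa" unfolding Z0_def Wa_def
    by (rule adj) (use e2 oZW iZW u2U(4) w2nU(2) in \<open>auto simp: Z0_def Wa_def\<close>)
  have e3: "XU \<union> XZ1 = insert y XU" "XZ1 \<union> XWa = insert y XWa"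
    unfolding XU_def XZ1_def XWa_def by auto
  have aUZ1: "polar_grassmann_adj sing k U Z1" unfolding U_def Z1_def
  proof (rule adj)
    show "vec.independent (XU \<union> XZ1)" "card (XU \<union> XZ1) = k + 1"
      unfolding e3 using ins_indep[OF iE1(3)] ynZ(1) cards(3) unfolding U_def by auto
    show "OS (XU \<union> XZ1)" unfolding e3
      by (rule OS_insert[OF oU(1) y(1)]) (use y(2) XU_def in auto)
    show "vec.span XU \<noteq> vec.span XZ1" using u2U(5) ynZ(1) unfolding U_def Z1_def by blast
  qed
  have aZ1Wa: "polar_grassmann_adj sing k Z1 Wa" unfolding Z1_def Wa_def
  proof (rule adj)
    show "vec.independent (XZ1 \<union> XWa)" "card (XZ1 \<union> XWa) = k + 1"
      unfolding e3 using ins_indep[OF iWa(1)] ynZ(3) iWa(2) unfolding Wa_def by auto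
    show "OS (XZ1 \<union> XWa)" unfolding e3
      by (rule OS_insert[OF oWa y(1)]) (use y(2) XWa_def in auto)
    show "vec.span XZ1 \<noteq> vec.span XWa" using u2U(5) ynZ(3) unfolding Wa_def Z1_def by blast
  qed
  have nUWb: "\<not> polar_grassmann_adj sing k U Wb" unfolding U_def Wb_def
    by (rule nonadj[of u2 _ _ w2]) (use n2 XU_def XWb_def in auto)
  have nUWa: "\<not> polar_grassmann_adj sing k U Wa" unfolding U_def Wa_def
    by (rule nonadj[of u2 _ _ w2]) (use n2 XU_def XWa_def in auto)
  have dUWb: "U \<noteq> Wb" "U \<noteq> Wa" using u2U w2nU by auto
  have Z01: "Z0 \<noteq> Z1" using u2U(5) ynZ(2) by auto
  have dimU: "vec.dim U = k" "vec.dim Wb = k" "vec.dim Z0 = k"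
    unfolding U_def Wb_def Z0_def using iE1 cards iWb by (simp_all add: vec.dim_eq_card_independent)
  have CC: "insert u2 (insert u1 (insert w1 E)) = C" using Cdef by auto
  have dsum: "vec.dim (vec.span (insert w2 (insert u2 (insert u1 (insert w1 E))))) = k + 2"
    unfolding CC using ins_indep[OF iC w2n[OF CM]] C(2) by (simp add: vec.dim_eq_card_independent)
  have uniq: "Z = Z0" if "Z \<in> polar_grassmann_vertices sing k" "polar_grassmann_adj sing k U Z"
      "polar_grassmann_adj sing k Z Wb" for Z
  proof (rule unique_cn[OF _ _ _ dimU dsum k2])
    show "U = vec.span (insert u2 (insert u1 E))" using U_def XU_def by simp
    show "Wb = vec.span (insert w2 (insert w1 E))" using Wb_def XWb_def by simp
    show "Z0 = vec.span (insert w1 (insert u1 E))" using Z0_def XZ0_def by simp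
    show "\<forall>x\<in>insert u2 (insert u1 E). f x u2 = 0" using Mo XM EM unfolding XU_def by blast
    show "\<forall>x\<in>insert w1 E. f x u2 = 0" using Mo XM EM by blast
    show "\<forall>x\<in>insert u1 E. f x w2 = 0" using w2o by simp
    show "\<forall>x\<in>insert w2 (insert w1 E). f x w2 = 0" using w2o svff[OF w2(1)] by simp
  qed (use n2 w2(3) that in auto)
  define Vx where "Vx = polar_grassmann_vertices sing k"
  define Ed where "Ed = polar_grassmann_adj sing k"
  from DR obtain b c where conn: "graph_connected Vx Ed" and H: "\<forall>x\<in>Vx. \<forall>y\<in>Vx.
       card {z \<in> Vx. Ed x z \<and> gdist Vx Ed z y = gdist Vx Ed x y + 1} = b (gdist Vx Ed x y) \<and>
       (gdist Vx Ed x y \<ge> 1 \<longrightarrow>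
          card {z \<in> Vx. Ed x z \<and> gdist Vx Ed z y = gdist Vx Ed x y - 1} = c (gdist Vx Ed x y))"
    unfolding distance_regular_def Vx_def Ed_def by blast
  have g1: "gdist Vx Ed z w = 1 \<longleftrightarrow> Ed z w \<and> z \<noteq> w" if "z \<in> Vx" "w \<in> Vx" for z w
    using gdist_1[OF that] conn that unfolding graph_connected_def by blast
  have gUWb: "gdist Vx Ed U Wb = 2"
    by (rule gdist_2[of _ _ _ Z0]) (use vU vWb vZ0 dUWb nUWb aUZ0 aZ0Wb in \<open>auto simp: Vx_def Ed_def\<close>)
  have gUWa: "gdist Vx Ed U Wa = 2"
    by (rule gdist_2[of _ _ _ Z0]) (use vU vWa vZ0 dUWb nUWa aUZ0 aZ0Wa in \<open>auto simp: Vx_def Ed_def\<close>)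
  have "{z \<in> Vx. Ed U z \<and> gdist Vx Ed z Wb = gdist Vx Ed U Wb - 1} = {Z0}"
  proof
    show "{Z0} \<subseteq> {z \<in> Vx. Ed U z \<and> gdist Vx Ed z Wb = gdist Vx Ed U Wb - 1}"
      using g1[of Z0 Wb] vZ0 vWb aUZ0 aZ0Wb gUWb unfolding Vx_def Ed_def polar_grassmann_adj_def by auto
    show "{z \<in> Vx. Ed U z \<and> gdist Vx Ed z Wb = gdist Vx Ed U Wb - 1} \<subseteq> {Z0}"
    proof
      fix z assume "z \<in> {z \<in> Vx. Ed U z \<and> gdist Vx Ed z Wb = gdist Vx Ed U Wb - 1}"
      then have "z \<in> Vx" "Ed U z" "gdist Vx Ed z Wb = 1" using gUWb by auto
      then have "Ed z Wb" using g1 vWb Vx_def by blast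
      then show "z \<in> {Z0}" using uniq \<open>z \<in> Vx\<close> \<open>Ed U z\<close> unfolding Vx_def Ed_def by blast
    qed
  qed
  then have c2: "c 2 = 1" using H vU vWb gUWb unfolding Vx_def Ed_def by force
  have S2: "{Z0, Z1} \<subseteq> {z \<in> Vx. Ed U z \<and> gdist Vx Ed z Wa = gdist Vx Ed U Wa - 1}"
    using g1[of Z0 Wa] g1[of Z1 Wa] vZ0 vZ1 vWa aUZ0 aZ0Wa aUZ1 aZ1Wa gUWa
    unfolding Vx_def Ed_def polar_grassmann_adj_def by auto
  have "card {z \<in> Vx. Ed U z \<and> gdist Vx Ed z Wa = gdist Vx Ed U Wa - 1} = 1"
    using H vU vWa gUWa c2 unfolding Vx_def Ed_def by force
  then obtain a where "{z \<in> Vx. Ed U z \<and> gdist Vx Ed z Wa = gdist Vx Ed U Wa - 1} = {a}"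
    by (rule card_1_singletonE)
  then show False using S2 Z01 by blast
qed

end


lemma pform_symp:
  assumes "symplectic_form B"
  shows "pform B (\<lambda>_. True) (totally_isotropic B)"
proof -
  have bl: "bilinear_form B" and alt: "\<And>v. B v v = 0" and nd: "nondegenerate_form B"
    using assms unfolding symplectic_form_def by auto
  have add1: "\<And>x y z. B (x + y) z = B x z + B y z" and sc1: "\<And>c x z. B (c *s x) z = c * B x z"
    and add2: "\<And>x y z. B z (x + y) = B z x + B z y" and sc2: "\<And>c x z. B z (c *s x) = c * B z x"
    using bl unfolding bilinear_form_def by auto
  have anti: "B y x = - B x y" for x y
  proof -
    have "0 = B (x + y) (x + y)" using alt by simp
    also have "\<dots> = B x x + B x y + (B y x + B y y)" by (simp add: add1 add2)
    finally show ?thesis using alt by (simp add: eq_neg_iff_add_eq_0 add.commute)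
  qed
  show ?thesis
  proof
    show "\<exists>d. \<forall>v. B v (d *s p) = c * B v p" for c p by (rule exI[of _ c]) (simp add: sc2)
    show "B x y = 0 \<longleftrightarrow> B y x = 0" for x y using anti[of x y] by simp
    show "\<exists>c. True" by simp
    show "v = 0" if "\<forall>x. B x v = 0" for v
      using nd that anti unfolding nondegenerate_form_def by (metis neg_equal_0_iff_equal)
    show "totally_isotropic B S \<longleftrightarrow> (\<forall>u\<in>S. True) \<and> (\<forall>u\<in>S. \<forall>v\<in>S. B u v = 0)" for S
      unfolding totally_isotropic_def by simp
  qed (auto simp: add1 sc1 add2 alt)
qed

lemma pform_orth:
  assumes "nondegenerate_quadratic_form Q"
  shows "pform (polar_form Q) (\<lambda>v. Q v = 0) (totally_singular Q)"
proof -
  have qf: "quadratic_form Q" and nd: "\<And>v. v \<noteq> 0 \<Longrightarrow> (\<forall>w. polar_form Q v w = 0) \<Longrightarrow> Q v \<noteq> 0"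
    using assms unfolding nondegenerate_quadratic_form_def by auto
  have qs: "\<And>c v. Q (c *s v) = c ^ 2 * Q v" and bl: "bilinear_form (polar_form Q)"
    using qf unfolding quadratic_form_def by auto
  have add1: "\<And>x y z. polar_form Q (x + y) z = polar_form Q x z + polar_form Q y z"
    and sc1: "\<And>c x z. polar_form Q (c *s x) z = c * polar_form Q x z"
    and add2: "\<And>x y z. polar_form Q z (x + y) = polar_form Q z x + polar_form Q z y"
    and sc2: "\<And>c x z. polar_form Q z (c *s x) = c * polar_form Q x z \<Longrightarrow> True"
    using bl unfolding bilinear_form_def by auto
  have sc2': "\<And>c x z. polar_form Q z (c *s x) = c * polar_form Q z x"
    using bl unfolding bilinear_form_def by auto
  have sym: "polar_form Q x y = polar_form Q y x" for x y
    unfolding polar_form_def by (metis add.commute diff_right_commute)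
  have Qadd: "Q (x + y) = polar_form Q x y + Q x + Q y" for x y
    unfolding polar_form_def by simp
  have Q0: "Q 0 = 0" using qs[of 0 0] by simp
  show ?thesis
  proof
    show "\<exists>d. \<forall>v. polar_form Q v (d *s p) = c * polar_form Q v p" for c p
      by (rule exI[of _ c]) (simp add: sc2')
    show "polar_form Q x y = 0 \<longleftrightarrow> polar_form Q y x = 0" for x y using sym[of x y] by simp
    show "Q 0 = 0" by (rule Q0)
    show "Q (x + y) = 0" if "Q x = 0" "Q y = 0" "polar_form Q x y = 0" for x y
      using that Qadd by simp
    show "Q (c *s x) = 0" if "Q x = 0" for c x using that qs by simp
    show "polar_form Q x x = 0" if "Q x = 0" for x
    proof -
      have "((1::'a) + 1) *s x = x + x" by (simp only: vector_sadd_rdistrib vector_smult_lid)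
      then have "x + x = (2::'a) *s x" by (simp only: one_add_one)
      then have "Q (x + x) = 0" using qs[of 2 x] that by simp
      then show ?thesis unfolding polar_form_def using that by simp
    qed
    show "\<exists>c. Q (v + c *s a) = 0" if "Q a = 0" "polar_form Q v a \<noteq> 0" for v a
    proof (rule exI[of _ "- Q v / polar_form Q v a"])
      let ?c = "- Q v / polar_form Q v a"
      have "Q (v + ?c *s a) = polar_form Q v (?c *s a) + Q v + Q (?c *s a)" by (rule Qadd)
      also have "\<dots> = ?c * polar_form Q v a + Q v + ?c ^ 2 * Q a" by (simp only: sc2' qs)
      also have "\<dots> = 0" using that by simp
      finally show "Q (v + ?c *s a) = 0" .
    qed
    show "v = 0" if "Q v = 0" "\<forall>x. polar_form Q x v = 0" for v
    proof (rule ccontr)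
      assume "v \<noteq> 0"
      moreover have "\<forall>w. polar_form Q v w = 0" using that(2) sym by simp
      ultimately have "Q v \<noteq> 0" by (rule nd)
      with that(1) show False by simp
    qed
    show "totally_singular Q S \<longleftrightarrow> (\<forall>u\<in>S. Q u = 0) \<and> (\<forall>u\<in>S. \<forall>v\<in>S. polar_form Q u v = 0)"
      if "vec.subspace S" for S
    proof
      assume h: "totally_singular Q S"
      have "polar_form Q u v = 0" if "u \<in> S" "v \<in> S" for u v
      proof -
        have "u + v \<in> S" using vec.subspace_add[OF \<open>vec.subspace S\<close>] that by blast
        then show ?thesis using h that unfolding totally_singular_def polar_form_def by simp
      qed
      then show "(\<forall>u\<in>S. Q u = 0) \<and> (\<forall>u\<in>S. \<forall>v\<in>S. polar_form Q u v = 0)"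
        using h unfolding totally_singular_def by blast
    next
      assume "(\<forall>u\<in>S. Q u = 0) \<and> (\<forall>u\<in>S. \<forall>v\<in>S. polar_form Q u v = 0)"
      then show "totally_singular Q S" unfolding totally_singular_def by blast
    qed
  qed (auto simp: add1 sc1 add2)
qed

lemma involution_facts:
  assumes "field_involution \<sigma>"
  shows "\<sigma> 0 = 0" "\<sigma> 1 = 1" "\<And>x y. \<sigma> (x + y) = \<sigma> x + \<sigma> y" "\<And>x y. \<sigma> (x * y) = \<sigma> x * \<sigma> y"
    "\<And>x. \<sigma> (\<sigma> x) = x" "\<And>x. \<sigma> (inverse x) = inverse (\<sigma> x)" "\<exists>g. g + \<sigma> g \<noteq> 0"
proof -
  have ad: "\<And>x y. \<sigma> (x + y) = \<sigma> x + \<sigma> y" and mu: "\<And>x y. \<sigma> (x * y) = \<sigma> x * \<sigma> y"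
    and inv: "\<And>x. \<sigma> (\<sigma> x) = x" and nt: "\<exists>x. \<sigma> x \<noteq> x"
    using assms unfolding field_involution_def by auto
  show s0: "\<sigma> 0 = 0"
  proof -
    have "\<sigma> 0 + \<sigma> 0 = \<sigma> 0 + 0" using ad[of 0 0] by simp
    then show ?thesis by (rule add_left_imp_eq)
  qed
  show s1: "\<sigma> 1 = 1"
  proof -
    have "\<sigma> 1 \<noteq> 0"
    proof
      assume "\<sigma> 1 = 0"
      then have "\<sigma> (\<sigma> 1) = 0" using s0 by simp
      then show False using inv[of 1] by simp
    qed
    moreover have "\<sigma> 1 * \<sigma> 1 = \<sigma> 1 * 1" using mu[of 1 1] by simp
    ultimately show ?thesis by simp
  qed
  show "\<And>x y. \<sigma> (x + y) = \<sigma> x + \<sigma> y" "\<And>x y. \<sigma> (x * y) = \<sigma> x * \<sigma> y" "\<And>x. \<sigma> (\<sigma> x) = x"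
    by (rule ad mu inv)+
  show "\<sigma> (inverse x) = inverse (\<sigma> x)" for x
  proof (cases "x = 0")
    case True then show ?thesis using s0 by simp
  next
    case False
    then have "\<sigma> x * \<sigma> (inverse x) = 1" using mu[of x "inverse x"] s1 by simp
    then show ?thesis by (metis inverse_unique)
  qed
  show "\<exists>g. g + \<sigma> g \<noteq> 0"
  proof (cases "1 + \<sigma> 1 = (0::'a)")
    case False then show ?thesis by blast
  next
    case True
    then have two: "(1::'a) + 1 = 0" using s1 by simp
    obtain x where x: "\<sigma> x \<noteq> x" using nt by blast
    have "x + x = (1 + 1) * x" by (simp add: distrib_right)
    then have "x + x = 0" using two by simp
    then have xm: "x = - x" by (simp only: add_eq_0_iff)
    have "x + \<sigma> x \<noteq> 0"
    proof
      assume "x + \<sigma> x = 0"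
      then have "\<sigma> x = - x" by (simp only: add_eq_0_iff)
      then show False using x xm by simp
    qed
    then show ?thesis by blast
  qed
qed

lemma pform_unit:
  assumes "hermitian_form \<sigma> B" "nondegenerate_form B"
  shows "pform B (\<lambda>v. B v v = 0) (totally_isotropic B)"
proof -
  have fi: "field_involution \<sigma>" and add1: "\<And>u v w. B (u + v) w = B u w + B v w"
    and sc1: "\<And>c u w. B (c *s u) w = c * B u w" and herm: "\<And>u w. B w u = \<sigma> (B u w)"
    using assms(1) unfolding hermitian_form_def by blast+
  note sf = involution_facts[OF fi]
  have add2: "B z (x + y) = B z x + B z y" for x y z
  proof -
    have "B z (x + y) = \<sigma> (B (x + y) z)" by (rule herm)
    also have "\<dots> = \<sigma> (B x z) + \<sigma> (B y z)" by (simp only: add1 sf(3))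
    also have "\<dots> = B z x + B z y" by (simp only: herm[of z x, symmetric] herm[of z y, symmetric])
    finally show ?thesis .
  qed
  have sc2: "B z (c *s x) = \<sigma> c * B z x" for c x z
  proof -
    have "B z (c *s x) = \<sigma> (B (c *s x) z)" by (rule herm)
    also have "\<dots> = \<sigma> c * \<sigma> (B x z)" by (simp only: sc1 sf(4))
    also have "\<dots> = \<sigma> c * B z x" by (simp only: herm[of z x, symmetric])
    finally show ?thesis .
  qed
  have z1: "B x y = 0 \<longleftrightarrow> B y x = 0" for x y
  proof
    assume "B x y = 0" then show "B y x = 0" using herm[of y x] sf(1) by simp
  next
    assume "B y x = 0" then show "B x y = 0" using herm[of x y] sf(1) by simp
  qed
  show ?thesis
  proof
    show "\<exists>d. \<forall>v. B v (d *s p) = c * B v p" for c p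
      by (rule exI[of _ "\<sigma> c"]) (simp add: sc2 sf(5))
    show "B x y = 0 \<longleftrightarrow> B y x = 0" for x y by (rule z1)
    show "B 0 0 = 0" using sc1[of 0 0 0] by simp
    show "B (x + y) (x + y) = 0" if "B x x = 0" "B y y = 0" "B x y = 0" for x y
    proof -
      have "B y x = 0" using that(3) z1[of x y] by simp
      then show ?thesis using that by (simp add: add1 add2)
    qed
    show "B (c *s x) (c *s x) = 0" if "B x x = 0" for c x
      using that by (simp add: sc1 sc2)
    show "B x x = 0" if "B x x = 0" for x using that .
    show "\<exists>c. B (v + c *s a) (v + c *s a) = 0" if "B a a = 0" "B v a \<noteq> 0" for v a
    proof -
      define t where "t = B v a"
      define h where "h = B v v"
      obtain g where g: "g + \<sigma> g \<noteq> 0" using sf(7) by blast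
      define e where "e = g + \<sigma> g"
      have se: "\<sigma> e = e" unfolding e_def using sf(3,5) by (simp add: add.commute)
      have sh: "\<sigma> h = h" unfolding h_def using herm[of v v] by simp
      have st: "\<sigma> t \<noteq> 0"
      proof
        assume "\<sigma> t = 0"
        then have "\<sigma> (\<sigma> t) = 0" using sf(1) by simp
        then show False using sf(5)[of t] that(2) unfolding t_def by simp
      qed
      define d where "d = - (h * g / e)"
      define c where "c = d / \<sigma> t"
      have sneg: "\<sigma> (- x) = - \<sigma> x" for x
      proof -
        have "\<sigma> x + \<sigma> (- x) = 0" using sf(3)[of x "-x"] sf(1) by simp
        then show ?thesis by (simp only: add_eq_0_iff)
      qed
      have sdiv: "\<sigma> (x / y) = \<sigma> x / \<sigma> y" for x y
        by (simp add: divide_inverse sf(4,6))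
      have sd: "\<sigma> d = - (h * \<sigma> g / e)" unfolding d_def using sneg sdiv sf(4) sh se by simp
      have sc: "\<sigma> c = \<sigma> d / t" unfolding c_def using sdiv sf(5) by simp
      have Bav: "B a v = \<sigma> t" unfolding t_def by (rule herm)
      have "B (v + c *s a) (v + c *s a) = h + \<sigma> c * t + c * \<sigma> t + c * (\<sigma> c * B a a)"
        unfolding h_def t_def by (simp add: add1 add2 sc1 sc2 Bav[unfolded t_def] algebra_simps)
      also have "\<dots> = h + \<sigma> d + d" using that(1) sc st that(2) unfolding c_def t_def by simp
      also have "\<dots> = h - h * (g + \<sigma> g) / e" by (simp only: sd) (simp add: d_def distrib_left add_divide_distrib algebra_simps)
      also have "\<dots> = 0" using g unfolding e_def by simp
      finally show ?thesis by blast
    qed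
    show "v = 0" if "\<forall>x. B x v = 0" for v
    proof -
      have "\<forall>w. B v w = 0"
      proof
        fix w show "B v w = 0" using that z1[of w v] by simp
      qed
      then show ?thesis using assms(2) unfolding nondegenerate_form_def by blast
    qed
    show "totally_isotropic B S \<longleftrightarrow> (\<forall>u\<in>S. B u u = 0) \<and> (\<forall>u\<in>S. \<forall>v\<in>S. B u v = 0)" for S
      unfolding totally_isotropic_def by blast
  qed (auto simp: add1 sc1 add2)
qed

theorem corollary4p4:
  fixes sing :: "('a::{field,finite}^'n) set \<Rightarrow> bool"
    and \<omega> k :: nat
  assumes "classical_formed_space sing \<omega>"
    and "\<omega> \<ge> 2"
    and "1 < k" and "k < \<omega>"
  shows "\<not> distance_regular (polar_grassmann_vertices sing k) (polar_grassmann_adj sing k)"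
proof -
  from assms(1) obtain M where M: "vec.subspace M" "sing M" "vec.dim M = \<omega>"
    unfolding classical_formed_space_def has_witt_index_def by blast
  have k1: "k + 1 \<le> vec.dim M" "2 \<le> k" using assms M by auto
  from assms(1) have
    "(\<exists>B. symplectic_form B \<and> CARD('n) = 2 * \<omega> \<and> sing = totally_isotropic B) \<or>
     (\<exists>Q. nondegenerate_quadratic_form Q \<and> CARD('n) \<in> {2 * \<omega> + 1, 2 * \<omega>, 2 * \<omega> + 2}
          \<and> sing = totally_singular Q) \<or>
     (\<exists>\<sigma> B. hermitian_form \<sigma> B \<and> nondegenerate_form B \<and> CARD('n) \<in> {2 * \<omega> + 1, 2 * \<omega>}
          \<and> sing = totally_isotropic B)"
    unfolding classical_formed_space_def by blast
  then show ?thesis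
  proof (elim disjE exE conjE)
    fix B assume "symplectic_form B" "sing = totally_isotropic B"
    then have P: "pform B (\<lambda>_. True) sing" using pform_symp by simp
    show ?thesis by (rule pform.main[OF P M(1,2) k1])
  next
    fix Q assume "nondegenerate_quadratic_form Q" "sing = totally_singular Q"
    then have P: "pform (polar_form Q) (\<lambda>v. Q v = 0) sing" using pform_orth by simp
    show ?thesis by (rule pform.main[OF P M(1,2) k1])
  next
    fix \<sigma> B assume "hermitian_form \<sigma> B" "nondegenerate_form B" "sing = totally_isotropic B"
    then have P: "pform B (\<lambda>v. B v v = 0) sing" using pform_unit by simp
    show ?thesis by (rule pform.main[OF P M(1,2) k1])
  qed
qed


end
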